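(* Fix a $C^0$-concept over a topologized field $\mathbb{K}$. Let $E,F\in\mathcal{M}$, $U\subseteq E$ open, $f\in C^0(U,F)$, and suppose there exists a $C^0$-map $g\colon P\to F$ defined on an open neighbourhood $P$ of $U\times E\times\{0\}$ in $U^{[1]}$ such that $g(x,y,t)=\frac{f(x+ty)-f(x)}{t}$ for all $(x,y,t)\in P$ with $t\ne0$. Then $f$ is of class $C^1$ and $g=f^{[1]}|_P$.
   Context: Let $\mathbb{K}$ be a commutative ring with unit (here a field) carrying a topology. A $C^0$-concept over $\mathbb{K}$ consists of: (a) a class $\mathcal{M}$ of topologized $\mathbb{K}$-modules with $\mathbb{K}\in\mathcal{M}$; (b) for $E,F\in\mathcal{M}$ and open $U\subseteq E$, a set $C^0(U,F)$ of continuous maps; (c) for $E_1,E_2\in\mathcal{M}$ a topology on $E_1\times E_2$ (not necessarily the product topology) making it a member of $\mathcal{M}$; subject to: (I.1) composites of $C^0$-maps are $C^0$, identities and inclusions of open subsets are $C^0$; (I.2) $x\mapsto rx+b$ is $C^0$; (I.3) $t\mapsto tv+x$ is $C^0$; (I.4) $\mathbb{K}^\times$ is open and inversion is $C^0$; (I.5) a map which is $C^0$ on each member of an open cover of its domain is $C^0$; (II.1) projections and $v\mapsto(v,y)$, $w\mapsto(x,w)$ are $C^0$; (II.2) $f_1\times f_2$ is $C^0$ for $C^0$-maps $f_i$; (II.3) diagonals are $C^0$; (II.4) exchange/associativity maps of products are $C^0$ both ways; (II.5) addition and scalar multiplication are $C^0$; (III) a $C^0$-map on open $U\subseteq\mathbb{K}$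 is determined by its values on $U\cap\mathbb{K}^\times$. $U^{[1]}:=\{(x,v,t)\in U\times E\times\mathbb{K}:x+tv\in U\}$, open in $E\times E\times\mathbb{K}$. A $C^0$-map $f$ is $C^1$ if there is a $C^0$-map $f^{[1]}\colon U^{[1]}\to F$ with $f(x+tv)-f(x)=t\,f^{[1]}(x,v,t)$ for all $(x,v,t)\in U^{[1]}$. *)

theory Defs
  imports "HOL-Analysis.Analysis"
begin

text \<open>
  Since HOL cannot quantify over a class of types,
  all members of the class M live as subsets (carriers) of one universe type 'u.
  The ground field K is a type 'k of class field carrying a topology KT; it is
  represented inside the universe by an injective map emb.  Products E1 x E2
  are represented by an injective pairing function on the universe; the
  product object prd E1 E2 has the componentwise module structure but an
  arbitrary topology.  Maps are total HOL functions, regarded on their domain only.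
\<close>

record ('k, 'u) tmod =
  carr :: "'u set"
  zer :: 'u
  ad :: "'u \<Rightarrow> 'u \<Rightarrow> 'u"
  sm :: "'k \<Rightarrow> 'u \<Rightarrow> 'u"
  tp :: "'u topology"

definition is_tmodule :: "('k::field, 'u) tmod \<Rightarrow> bool" where
  "is_tmodule E \<longleftrightarrow>
     zer E \<in> carr E \<and>
     (\<forall>x\<in>carr E. \<forall>y\<in>carr E. ad E x y \<in> carr E) \<and>
     (\<forall>r. \<forall>x\<in>carr E. sm E r x \<in> carr E) \<and>
     (\<forall>x\<in>carr E. \<forall>y\<in>carr E. \<forall>z\<in>carr E. ad E (ad E x y) z = ad E x (ad E y z)) \<and>
     (\<forall>x\<in>carr E. \<forall>y\<in>carr E. ad E x y = ad E y x) \<and>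
     (\<forall>x\<in>carr E. ad E x (zer E) = x) \<and>
     (\<forall>x\<in>carr E. \<exists>y\<in>carr E. ad E x y = zer E) \<and>
     (\<forall>r. \<forall>x\<in>carr E. \<forall>y\<in>carr E. sm E r (ad E x y) = ad E (sm E r x) (sm E r y)) \<and>
     (\<forall>r s. \<forall>x\<in>carr E. sm E (r + s) x = ad E (sm E r x) (sm E s x)) \<and>
     (\<forall>r s. \<forall>x\<in>carr E. sm E (r * s) x = sm E r (sm E s x)) \<and>
     (\<forall>x\<in>carr E. sm E 1 x = x) \<and>
     topspace (tp E) = carr E"

definition msub :: "('k::field, 'u) tmod \<Rightarrow> 'u \<Rightarrow> 'u \<Rightarrow> 'u" where
  "msub E x y = ad E x (sm E (-1) y)"

record ('k, 'u) concept =
  KT :: "'k topology"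
  emb :: "'k \<Rightarrow> 'u"
  pairing :: "'u \<Rightarrow> 'u \<Rightarrow> 'u"
  Mcls :: "('k, 'u) tmod set"
  C0s :: "('k, 'u) tmod \<Rightarrow> 'u set \<Rightarrow> ('k, 'u) tmod \<Rightarrow> ('u \<Rightarrow> 'u) set"
  prd :: "('k, 'u) tmod \<Rightarrow> ('k, 'u) tmod \<Rightarrow> ('k, 'u) tmod"

definition kv :: "('k, 'u) concept \<Rightarrow> 'u \<Rightarrow> 'k" where
  "kv C u = inv (emb C) u"

definition Kobj :: "('k::field, 'u) concept \<Rightarrow> ('k, 'u) tmod" where
  "Kobj C = \<lparr> carr = range (emb C), zer = emb C 0,
      ad = (\<lambda>a b. emb C (kv C a + kv C b)),
      sm = (\<lambda>r a. emb C (r * kv C a)),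
      tp = topology (\<lambda>S. S \<subseteq> range (emb C) \<and> openin (KT C) (emb C -` S)) \<rparr>"

definition pfst :: "('k, 'u) concept \<Rightarrow> 'u \<Rightarrow> 'u" where
  "pfst C p = fst (inv (case_prod (pairing C)) p)"

definition psnd :: "('k, 'u) concept \<Rightarrow> 'u \<Rightarrow> 'u" where
  "psnd C p = snd (inv (case_prod (pairing C)) p)"

definition concept_struct :: "('k::field, 'u) concept \<Rightarrow> bool" where
  "concept_struct C \<longleftrightarrow>
     topspace (KT C) = UNIV \<and> inj (emb C) \<and> inj (case_prod (pairing C)) \<and>
     Kobj C \<in> Mcls C \<and> (\<forall>E\<in>Mcls C. is_tmodule E) \<and>
     (\<forall>E1\<in>Mcls C. \<forall>E2\<in>Mcls C.
        prd C E1 E2 \<in> Mcls C \<and>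
        carr (prd C E1 E2) = {pairing C a b | a b. a \<in> carr E1 \<and> b \<in> carr E2} \<and>
        zer (prd C E1 E2) = pairing C (zer E1) (zer E2) \<and>
        (\<forall>a1\<in>carr E1. \<forall>a2\<in>carr E1. \<forall>b1\<in>carr E2. \<forall>b2\<in>carr E2.
           ad (prd C E1 E2) (pairing C a1 b1) (pairing C a2 b2)
             = pairing C (ad E1 a1 a2) (ad E2 b1 b2)) \<and>
        (\<forall>r. \<forall>a\<in>carr E1. \<forall>b\<in>carr E2.
           sm (prd C E1 E2) r (pairing C a b) = pairing C (sm E1 r a) (sm E2 r b))) \<and>
     (\<forall>E\<in>Mcls C. \<forall>F\<in>Mcls C. \<forall>U f. f \<in> C0s C E U F \<longrightarrow>
        openin (tp E) U \<and> f ` U \<subseteq> carr F \<and>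
        continuous_map (subtopology (tp E) U) (tp F) f) \<and>
     (\<forall>E\<in>Mcls C. \<forall>F\<in>Mcls C. \<forall>U f g. f \<in> C0s C E U F \<longrightarrow> (\<forall>x\<in>U. g x = f x)
        \<longrightarrow> g \<in> C0s C E U F)"

definition concept_I :: "('k::field, 'u) concept \<Rightarrow> bool" where
  "concept_I C \<longleftrightarrow>
     \<comment> \<open>(I.1)\<close>
     (\<forall>E\<in>Mcls C. \<forall>F\<in>Mcls C. \<forall>G\<in>Mcls C. \<forall>U V f g.
        f \<in> C0s C E U F \<longrightarrow> g \<in> C0s C F V G \<longrightarrow> f ` U \<subseteq> V \<longrightarrow> g \<circ> f \<in> C0s C E U G) \<and>
     (\<forall>E\<in>Mcls C. \<forall>V. openin (tp E) V \<longrightarrow> id \<in> C0s C E V E) \<and>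
     \<comment> \<open>(I.2)\<close>
     (\<forall>E\<in>Mcls C. \<forall>r. \<forall>b\<in>carr E. (\<lambda>x. ad E (sm E r x) b) \<in> C0s C E (carr E) E) \<and>
     \<comment> \<open>(I.3)\<close>
     (\<forall>E\<in>Mcls C. \<forall>v\<in>carr E. \<forall>x\<in>carr E.
        (\<lambda>s. ad E (sm E (kv C s) v) x) \<in> C0s C (Kobj C) (carr (Kobj C)) E) \<and>
     \<comment> \<open>(I.4)\<close>
     openin (tp (Kobj C)) (emb C ` (- {0})) \<and>
     (\<lambda>s. emb C (inverse (kv C s))) \<in> C0s C (Kobj C) (emb C ` (- {0})) (Kobj C) \<and>
     \<comment> \<open>(I.5)\<close>
     (\<forall>E\<in>Mcls C. \<forall>F\<in>Mcls C. \<forall>U f \<V>. openin (tp E) U \<longrightarrow> (\<forall>V\<in>\<V>. openin (tp E) V) \<longrightarrow>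
        \<Union>\<V> = U \<longrightarrow> (\<forall>V\<in>\<V>. f \<in> C0s C E V F) \<longrightarrow> f \<in> C0s C E U F)"

definition concept_II :: "('k::field, 'u) concept \<Rightarrow> bool" where
  "concept_II C \<longleftrightarrow>
     \<comment> \<open>(II.1)\<close>
     (\<forall>E1\<in>Mcls C. \<forall>E2\<in>Mcls C.
        pfst C \<in> C0s C (prd C E1 E2) (carr (prd C E1 E2)) E1 \<and>
        psnd C \<in> C0s C (prd C E1 E2) (carr (prd C E1 E2)) E2 \<and>
        (\<forall>y\<in>carr E2. (\<lambda>v. pairing C v y) \<in> C0s C E1 (carr E1) (prd C E1 E2)) \<and>
        (\<forall>x\<in>carr E1. (\<lambda>w. pairing C x w) \<in> C0s C E2 (carr E2) (prd C E1 E2))) \<and>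
     \<comment> \<open>(II.2)\<close>
     (\<forall>E1\<in>Mcls C. \<forall>E2\<in>Mcls C. \<forall>F1\<in>Mcls C. \<forall>F2\<in>Mcls C. \<forall>U1 U2 f1 f2.
        f1 \<in> C0s C E1 U1 F1 \<longrightarrow> f2 \<in> C0s C E2 U2 F2 \<longrightarrow>
        (\<lambda>p. pairing C (f1 (pfst C p)) (f2 (psnd C p)))
          \<in> C0s C (prd C E1 E2) {pairing C a b | a b. a \<in> U1 \<and> b \<in> U2} (prd C F1 F2)) \<and>
     \<comment> \<open>(II.3)\<close>
     (\<forall>E\<in>Mcls C. (\<lambda>x. pairing C x x) \<in> C0s C E (carr E) (prd C E E)) \<and>
     \<comment> \<open>(II.4)\<close>
     (\<forall>E1\<in>Mcls C. \<forall>E2\<in>Mcls C.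
        (\<lambda>p. pairing C (psnd C p) (pfst C p)) \<in> C0s C (prd C E1 E2) (carr (prd C E1 E2)) (prd C E2 E1)) \<and>
     (\<forall>E1\<in>Mcls C. \<forall>E2\<in>Mcls C. \<forall>E3\<in>Mcls C.
        (\<lambda>p. pairing C (pfst C (pfst C p)) (pairing C (psnd C (pfst C p)) (psnd C p)))
          \<in> C0s C (prd C (prd C E1 E2) E3) (carr (prd C (prd C E1 E2) E3)) (prd C E1 (prd C E2 E3)) \<and>
        (\<lambda>p. pairing C (pairing C (pfst C p) (pfst C (psnd C p))) (psnd C (psnd C p)))
          \<in> C0s C (prd C E1 (prd C E2 E3)) (carr (prd C E1 (prd C E2 E3))) (prd C (prd C E1 E2) E3)) \<and>
     \<comment> \<open>(II.5)\<close>
     (\<forall>E\<in>Mcls C.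
        (\<lambda>p. ad E (pfst C p) (psnd C p)) \<in> C0s C (prd C E E) (carr (prd C E E)) E \<and>
        (\<lambda>p. sm E (kv C (pfst C p)) (psnd C p))
          \<in> C0s C (prd C (Kobj C) E) (carr (prd C (Kobj C) E)) E)"

definition concept_III :: "('k::field, 'u) concept \<Rightarrow> bool" where
  "concept_III C \<longleftrightarrow>
     (\<forall>F\<in>Mcls C. \<forall>U f g. openin (tp (Kobj C)) U \<longrightarrow>
        f \<in> C0s C (Kobj C) U F \<longrightarrow> g \<in> C0s C (Kobj C) U F \<longrightarrow>
        (\<forall>s\<in>U. kv C s \<noteq> 0 \<longrightarrow> f s = g s) \<longrightarrow> (\<forall>s\<in>U. f s = g s))"

definition C0_concept :: "('k::field, 'u) concept \<Rightarrow> bool" where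
  "C0_concept C \<longleftrightarrow> concept_struct C \<and> concept_I C \<and> concept_II C \<and> concept_III C"

definition EEK :: "('k::field, 'u) concept \<Rightarrow> ('k, 'u) tmod \<Rightarrow> ('k, 'u) tmod" where
  "EEK C E = prd C E (prd C E (Kobj C))"

definition U1 :: "('k::field, 'u) concept \<Rightarrow> ('k, 'u) tmod \<Rightarrow> 'u set \<Rightarrow> 'u set" where
  "U1 C E U = {pairing C x (pairing C v (emb C t)) | x v t.
                 x \<in> U \<and> v \<in> carr E \<and> ad E x (sm E t v) \<in> U}"

definition diffquot_map ::
  "('k::field, 'u) concept \<Rightarrow> ('k, 'u) tmod \<Rightarrow> 'u set \<Rightarrow> ('k, 'u) tmod
     \<Rightarrow> ('u \<Rightarrow> 'u) \<Rightarrow> ('u \<Rightarrow> 'u) \<Rightarrow> bool" where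
  "diffquot_map C E U F f h \<longleftrightarrow>
     h \<in> C0s C (EEK C E) (U1 C E U) F \<and>
     (\<forall>x v t. x \<in> U \<longrightarrow> v \<in> carr E \<longrightarrow> ad E x (sm E t v) \<in> U \<longrightarrow>
        msub F (f (ad E x (sm E t v))) (f x) = sm F t (h (pairing C x (pairing C v (emb C t)))))"

definition C1 :: "('k::field, 'u) concept \<Rightarrow> ('k, 'u) tmod \<Rightarrow> 'u set \<Rightarrow> ('k, 'u) tmod
     \<Rightarrow> ('u \<Rightarrow> 'u) \<Rightarrow> bool" where
  "C1 C E U F f \<longleftrightarrow> f \<in> C0s C E U F \<and> (\<exists>h. diffquot_map C E U F f h)"

end

theory Submission
  imports Defs
begin


lemma st: "C0_concept C \<Longrightarrow> concept_struct C" and sI: "C0_concept C \<Longrightarrow> concept_I C"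
  and sII: "C0_concept C \<Longrightarrow> concept_II C" and sIII: "C0_concept C \<Longrightarrow> concept_III C"
  by (simp_all add: C0_concept_def)

context fixes C :: "('k::field, 'u) concept" assumes CC: "C0_concept C"
begin

lemma SPrd0: "\<forall>E1\<in>Mcls C. \<forall>E2\<in>Mcls C.
        prd C E1 E2 \<in> Mcls C \<and>
        carr (prd C E1 E2) = {pairing C a b | a b. a \<in> carr E1 \<and> b \<in> carr E2} \<and>
        zer (prd C E1 E2) = pairing C (zer E1) (zer E2) \<and>
        (\<forall>a1\<in>carr E1. \<forall>a2\<in>carr E1. \<forall>b1\<in>carr E2. \<forall>b2\<in>carr E2.
           ad (prd C E1 E2) (pairing C a1 b1) (pairing C a2 b2)
             = pairing C (ad E1 a1 a2) (ad E2 b1 b2)) \<and>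
        (\<forall>r. \<forall>a\<in>carr E1. \<forall>b\<in>carr E2.
           sm (prd C E1 E2) r (pairing C a b) = pairing C (sm E1 r a) (sm E2 r b))"
  using st[OF CC] unfolding concept_struct_def by (elim conjE)
lemma SP: "topspace (KT C) = UNIV \<and> inj (emb C) \<and> inj (case_prod (pairing C)) \<and>
     Kobj C \<in> Mcls C \<and> (\<forall>E\<in>Mcls C. is_tmodule E)"
  using st[OF CC] unfolding concept_struct_def by (elim conjE, intro conjI)
lemma SC0: "(\<forall>E\<in>Mcls C. \<forall>F\<in>Mcls C. \<forall>U f. f \<in> C0s C E U F \<longrightarrow>
        openin (tp E) U \<and> f ` U \<subseteq> carr F \<and>
        continuous_map (subtopology (tp E) U) (tp F) f)"
  using st[OF CC] unfolding concept_struct_def by (elim conjE)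
lemma SExt: "(\<forall>E\<in>Mcls C. \<forall>F\<in>Mcls C. \<forall>U f g. f \<in> C0s C E U F \<longrightarrow> (\<forall>x\<in>U. g x = f x)
        \<longrightarrow> g \<in> C0s C E U F)"
  using st[OF CC] unfolding concept_struct_def by (elim conjE)
lemma K_in: "Kobj C \<in> Mcls C" by (rule SP[THEN conjunct2, THEN conjunct2, THEN conjunct2, THEN conjunct1])
lemma prd_in: "E1 \<in> Mcls C \<Longrightarrow> E2 \<in> Mcls C \<Longrightarrow> prd C E1 E2 \<in> Mcls C"
  by (rule SPrd0[rule_format, THEN conjunct1])
lemma carr_prd: "E1 \<in> Mcls C \<Longrightarrow> E2 \<in> Mcls C \<Longrightarrow>
   carr (prd C E1 E2) = {pairing C a b | a b. a \<in> carr E1 \<and> b \<in> carr E2}"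
  by (rule SPrd0[rule_format, THEN conjunct2, THEN conjunct1])
lemma inj_pr: "inj (case_prod (pairing C))" by (rule SP[THEN conjunct2, THEN conjunct2, THEN conjunct1])
lemma inj_emb: "inj (emb C)" by (rule SP[THEN conjunct2, THEN conjunct1])
lemma tmod: "E \<in> Mcls C \<Longrightarrow> is_tmodule E" using SP[THEN conjunct2, THEN conjunct2, THEN conjunct2, THEN conjunct2] by (rule bspec)
lemma pfst_pr[simp]: "pfst C (pairing C a b) = a"
  unfolding pfst_def using inv_f_f[OF inj_pr, of "(a,b)"] by simp
lemma psnd_pr[simp]: "psnd C (pairing C a b) = b"
  unfolding psnd_def using inv_f_f[OF inj_pr, of "(a,b)"] by simp
lemma pr_eq[simp]: "pairing C a b = pairing C c d \<longleftrightarrow> a = c \<and> b = d"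
  by (metis pfst_pr psnd_pr)
lemma kv_emb[simp]: "kv C (emb C t) = t" unfolding kv_def using inv_f_f[OF inj_emb] by simp
lemma emb_eq[simp]: "emb C s = emb C t \<longleftrightarrow> s = t" using inj_emb by (meson injD)
lemma emb_img[simp]: "emb C t \<in> emb C ` A \<longleftrightarrow> t \<in> A"
  using inj_image_mem_iff[OF inj_emb] .
lemma carr_K: "carr (Kobj C) = range (emb C)" by (simp add: Kobj_def)

lemma C0_props: assumes "f \<in> C0s C E U F" "E \<in> Mcls C" "F \<in> Mcls C"
  shows "openin (tp E) U" "f ` U \<subseteq> carr F" "continuous_map (subtopology (tp E) U) (tp F) f"
  using SC0[rule_format, OF assms(2,3,1)] by auto

lemma C0_ext: "f \<in> C0s C E U F \<Longrightarrow> E \<in> Mcls C \<Longrightarrow> F \<in> Mcls C \<Longrightarrow> (\<And>x. x \<in> U \<Longrightarrow> g x = f x)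
   \<Longrightarrow> g \<in> C0s C E U F"
  by (rule SExt[rule_format]) auto

lemma Icomp: "(\<forall>E\<in>Mcls C. \<forall>F\<in>Mcls C. \<forall>G\<in>Mcls C. \<forall>U V f g.
        f \<in> C0s C E U F \<longrightarrow> g \<in> C0s C F V G \<longrightarrow> f ` U \<subseteq> V \<longrightarrow> g \<circ> f \<in> C0s C E U G)"
  using sI[OF CC] unfolding concept_I_def by (elim conjE)
lemma Iid: "(\<forall>E\<in>Mcls C. \<forall>V. openin (tp E) V \<longrightarrow> id \<in> C0s C E V E)"
  using sI[OF CC] unfolding concept_I_def by (elim conjE)
lemma Iglue: "(\<forall>E\<in>Mcls C. \<forall>F\<in>Mcls C. \<forall>U f \<V>. openin (tp E) U \<longrightarrow> (\<forall>V\<in>\<V>. openin (tp E) V) \<longrightarrow>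
        \<Union>\<V> = U \<longrightarrow> (\<forall>V\<in>\<V>. f \<in> C0s C E V F) \<longrightarrow> f \<in> C0s C E U F)"
  using sI[OF CC] unfolding concept_I_def by (elim conjE)

lemma C0_comp: "f \<in> C0s C E U F \<Longrightarrow> g \<in> C0s C F V G \<Longrightarrow> f ` U \<subseteq> V \<Longrightarrow>
  E \<in> Mcls C \<Longrightarrow> F \<in> Mcls C \<Longrightarrow> G \<in> Mcls C \<Longrightarrow> (\<lambda>x. g (f x)) \<in> C0s C E U G"
proof -
  assume a: "f \<in> C0s C E U F" "g \<in> C0s C F V G" "f ` U \<subseteq> V"
    "E \<in> Mcls C" "F \<in> Mcls C" "G \<in> Mcls C"
  have "g \<circ> f \<in> C0s C E U G" by (rule Icomp[rule_format]) (fact a)+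
  then show ?thesis by (simp add: comp_def)
qed

lemma C0_id: "E \<in> Mcls C \<Longrightarrow> openin (tp E) V \<Longrightarrow> (\<lambda>x. x) \<in> C0s C E V E"
proof -
  assume "E \<in> Mcls C" "openin (tp E) V"
  then have "id \<in> C0s C E V E" by (rule Iid[rule_format])
  then show ?thesis by (simp add: id_def)
qed

lemma C0_restr: assumes "f \<in> C0s C E U F" "E \<in> Mcls C" "F \<in> Mcls C" "openin (tp E) V" "V \<subseteq> U"
  shows "f \<in> C0s C E V F"
  using C0_comp[OF C0_id[OF assms(2,4)] assms(1)] assms by auto

lemma C0_glue: "E \<in> Mcls C \<Longrightarrow> F \<in> Mcls C \<Longrightarrow> openin (tp E) U \<Longrightarrow> (\<forall>V\<in>\<V>. openin (tp E) V) \<Longrightarrow>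
        \<Union>\<V> = U \<Longrightarrow> (\<forall>V\<in>\<V>. f \<in> C0s C E V F) \<Longrightarrow> f \<in> C0s C E U F"
  by (rule Iglue[rule_format]) auto

lemma C0_preim: assumes "f \<in> C0s C E U F" "E \<in> Mcls C" "F \<in> Mcls C" "openin (tp F) Op"
  shows "openin (tp E) {x\<in>U. f x \<in> Op}"
proof -
  have U: "openin (tp E) U" using C0_props[OF assms(1-3)] by blast
  have "openin (subtopology (tp E) U) {x \<in> topspace (subtopology (tp E) U). f x \<in> Op}"
    by (rule openin_continuous_map_preimage[OF C0_props(3)[OF assms(1-3)] assms(4)])
  moreover have "topspace (subtopology (tp E) U) = U" using openin_subset[OF U] by auto
  ultimately show ?thesis using openin_trans_full U by fastforce
qed


lemma IIa: "(\<forall>E1\<in>Mcls C. \<forall>E2\<in>Mcls C.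
        pfst C \<in> C0s C (prd C E1 E2) (carr (prd C E1 E2)) E1 \<and>
        psnd C \<in> C0s C (prd C E1 E2) (carr (prd C E1 E2)) E2 \<and>
        (\<forall>y\<in>carr E2. (\<lambda>v. pairing C v y) \<in> C0s C E1 (carr E1) (prd C E1 E2)) \<and>
        (\<forall>x\<in>carr E1. (\<lambda>w. pairing C x w) \<in> C0s C E2 (carr E2) (prd C E1 E2)))"
  using sII[OF CC] unfolding concept_II_def by (elim conjE)
lemma IIb: "(\<forall>E1\<in>Mcls C. \<forall>E2\<in>Mcls C. \<forall>F1\<in>Mcls C. \<forall>F2\<in>Mcls C. \<forall>U1 U2 f1 f2.
        f1 \<in> C0s C E1 U1 F1 \<longrightarrow> f2 \<in> C0s C E2 U2 F2 \<longrightarrow>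
        (\<lambda>p. pairing C (f1 (pfst C p)) (f2 (psnd C p)))
          \<in> C0s C (prd C E1 E2) {pairing C a b | a b. a \<in> U1 \<and> b \<in> U2} (prd C F1 F2))"
  using sII[OF CC] unfolding concept_II_def by (elim conjE)
lemma IIc: "(\<forall>E\<in>Mcls C. (\<lambda>x. pairing C x x) \<in> C0s C E (carr E) (prd C E E))"
  using sII[OF CC] unfolding concept_II_def by (elim conjE)
lemma IIe: "(\<forall>E\<in>Mcls C.
        (\<lambda>p. ad E (pfst C p) (psnd C p)) \<in> C0s C (prd C E E) (carr (prd C E E)) E \<and>
        (\<lambda>p. sm E (kv C (pfst C p)) (psnd C p))
          \<in> C0s C (prd C (Kobj C) E) (carr (prd C (Kobj C) E)) E)"
  using sII[OF CC] unfolding concept_II_def by (elim conjE)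

lemma II1: "E1 \<in> Mcls C \<Longrightarrow> E2 \<in> Mcls C \<Longrightarrow>
        pfst C \<in> C0s C (prd C E1 E2) (carr (prd C E1 E2)) E1 \<and>
        psnd C \<in> C0s C (prd C E1 E2) (carr (prd C E1 E2)) E2 \<and>
        (\<forall>y\<in>carr E2. (\<lambda>v. pairing C v y) \<in> C0s C E1 (carr E1) (prd C E1 E2)) \<and>
        (\<forall>x\<in>carr E1. (\<lambda>w. pairing C x w) \<in> C0s C E2 (carr E2) (prd C E1 E2))"
  by (rule IIa[rule_format])
lemma II2: "E1\<in>Mcls C \<Longrightarrow> E2\<in>Mcls C \<Longrightarrow> F1\<in>Mcls C \<Longrightarrow> F2\<in>Mcls C \<Longrightarrow>
        f1 \<in> C0s C E1 V1 F1 \<Longrightarrow> f2 \<in> C0s C E2 V2 F2 \<Longrightarrow>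
        (\<lambda>p. pairing C (f1 (pfst C p)) (f2 (psnd C p)))
          \<in> C0s C (prd C E1 E2) {pairing C a b | a b. a \<in> V1 \<and> b \<in> V2} (prd C F1 F2)"
  by (rule IIb[rule_format])
lemma II3: "E\<in>Mcls C \<Longrightarrow> (\<lambda>x. pairing C x x) \<in> C0s C E (carr E) (prd C E E)"
  by (rule IIc[rule_format])
lemma II5: "E\<in>Mcls C \<Longrightarrow>
        (\<lambda>p. ad E (pfst C p) (psnd C p)) \<in> C0s C (prd C E E) (carr (prd C E E)) E \<and>
        (\<lambda>p. sm E (kv C (pfst C p)) (psnd C p))
          \<in> C0s C (prd C (Kobj C) E) (carr (prd C (Kobj C) E)) E"
  by (rule IIe[rule_format])
lemma Ia: "(\<forall>E\<in>Mcls C. \<forall>r. \<forall>b\<in>carr E. (\<lambda>x. ad E (sm E r x) b) \<in> C0s C E (carr E) E)"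
  using sI[OF CC] unfolding concept_I_def by (elim conjE)
lemma I2: "E\<in>Mcls C \<Longrightarrow> b\<in>carr E \<Longrightarrow> (\<lambda>x. ad E (sm E r x) b) \<in> C0s C E (carr E) E"
  by (rule Ia[rule_format])
lemma I4a: "openin (tp (Kobj C)) (emb C ` (- {0}))"
  using sI[OF CC] unfolding concept_I_def by (elim conjE)
lemma I4b: "(\<lambda>s. emb C (inverse (kv C s))) \<in> C0s C (Kobj C) (emb C ` (- {0})) (Kobj C)"
  using sI[OF CC] unfolding concept_I_def by (elim conjE)
lemmas I4 = I4a I4b
lemma IIIa: "(\<forall>F\<in>Mcls C. \<forall>U f g. openin (tp (Kobj C)) U \<longrightarrow>
        f \<in> C0s C (Kobj C) U F \<longrightarrow> g \<in> C0s C (Kobj C) U F \<longrightarrow>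
        (\<forall>s\<in>U. kv C s \<noteq> 0 \<longrightarrow> f s = g s) \<longrightarrow> (\<forall>s\<in>U. f s = g s))"
  using sIII[OF CC] unfolding concept_III_def .
lemma III: "F\<in>Mcls C \<Longrightarrow> openin (tp (Kobj C)) U \<Longrightarrow>
        f \<in> C0s C (Kobj C) U F \<Longrightarrow> g \<in> C0s C (Kobj C) U F \<Longrightarrow>
        (\<forall>s\<in>U. kv C s \<noteq> 0 \<longrightarrow> f s = g s) \<Longrightarrow> s \<in> U \<Longrightarrow> f s = g s"
  by (rule IIIa[rule_format, of F U f g]) auto

lemma top_carr: "E \<in> Mcls C \<Longrightarrow> topspace (tp E) = carr E"
  by (drule tmod, unfold is_tmodule_def, elim conjE)
lemma carr_open: "E \<in> Mcls C \<Longrightarrow> openin (tp E) (carr E)"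
  by (metis openin_topspace top_carr)
lemma C0_sub: "f \<in> C0s C E U F \<Longrightarrow> E \<in> Mcls C \<Longrightarrow> F \<in> Mcls C \<Longrightarrow> U \<subseteq> carr E"
  using C0_props(1) openin_subset top_carr by metis
lemma C0_in: "f \<in> C0s C E U F \<Longrightarrow> E \<in> Mcls C \<Longrightarrow> F \<in> Mcls C \<Longrightarrow> x \<in> U \<Longrightarrow> f x \<in> carr F"
  using C0_props(2) by blast

lemma zer_in0: "E \<in> Mcls C \<Longrightarrow> zer E \<in> carr E"
  by (drule tmod, unfold is_tmodule_def, elim conjE)
lemma ad_in0: "E \<in> Mcls C \<Longrightarrow> (\<forall>x\<in>carr E. \<forall>y\<in>carr E. ad E x y \<in> carr E)"
  by (drule tmod, unfold is_tmodule_def, elim conjE)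
lemma sm_in0: "E \<in> Mcls C \<Longrightarrow> (\<forall>r. \<forall>x\<in>carr E. sm E r x \<in> carr E)"
  by (drule tmod, unfold is_tmodule_def, elim conjE)
lemma ad_assoc0: "E \<in> Mcls C \<Longrightarrow> (\<forall>x\<in>carr E. \<forall>y\<in>carr E. \<forall>z\<in>carr E. ad E (ad E x y) z = ad E x (ad E y z))"
  by (drule tmod, unfold is_tmodule_def, elim conjE)
lemma ad_zer0: "E \<in> Mcls C \<Longrightarrow> (\<forall>x\<in>carr E. ad E x (zer E) = x)"
  by (drule tmod, unfold is_tmodule_def, elim conjE)
lemma ad_inv0: "E \<in> Mcls C \<Longrightarrow> (\<forall>x\<in>carr E. \<exists>y\<in>carr E. ad E x y = zer E)"
  by (drule tmod, unfold is_tmodule_def, elim conjE)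
lemma sm_add0: "E \<in> Mcls C \<Longrightarrow> (\<forall>r s. \<forall>x\<in>carr E. sm E (r + s) x = ad E (sm E r x) (sm E s x))"
  by (drule tmod, unfold is_tmodule_def, elim conjE)
lemma sm_sm0: "E \<in> Mcls C \<Longrightarrow> (\<forall>r s. \<forall>x\<in>carr E. sm E (r * s) x = sm E r (sm E s x))"
  by (drule tmod, unfold is_tmodule_def, elim conjE)
lemma sm_one0: "E \<in> Mcls C \<Longrightarrow> (\<forall>x\<in>carr E. sm E 1 x = x)"
  by (drule tmod, unfold is_tmodule_def, elim conjE)
lemma zer_in: "E \<in> Mcls C \<Longrightarrow> zer E \<in> carr E"
  by (rule zer_in0)
lemma ad_in: "E \<in> Mcls C \<Longrightarrow> x \<in> carr E \<Longrightarrow> y \<in> carr E \<Longrightarrow> ad E x y \<in> carr E"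
  by (rule ad_in0[rule_format])
lemma sm_in: "E \<in> Mcls C \<Longrightarrow> x \<in> carr E \<Longrightarrow> sm E r x \<in> carr E"
  by (rule sm_in0[rule_format])
lemma ad_zer: "E \<in> Mcls C \<Longrightarrow> x \<in> carr E \<Longrightarrow> ad E x (zer E) = x"
  by (rule ad_zer0[rule_format])
lemma sm_sm: "E \<in> Mcls C \<Longrightarrow> x \<in> carr E \<Longrightarrow> sm E r (sm E s x) = sm E (r * s) x"
  by (rule sm_sm0[rule_format, symmetric])
lemma sm_one: "E \<in> Mcls C \<Longrightarrow> x \<in> carr E \<Longrightarrow> sm E 1 x = x"
  by (rule sm_one0[rule_format])
lemma sm_add: "E \<in> Mcls C \<Longrightarrow> x \<in> carr E \<Longrightarrow> sm E (r + s) x = ad E (sm E r x) (sm E s x)"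
  by (rule sm_add0[rule_format])
lemma ad_assoc: "E \<in> Mcls C \<Longrightarrow> x \<in> carr E \<Longrightarrow> y \<in> carr E \<Longrightarrow> z \<in> carr E \<Longrightarrow>
   ad E (ad E x y) z = ad E x (ad E y z)"
  by (rule ad_assoc0[rule_format])
lemma ad_inv: "E \<in> Mcls C \<Longrightarrow> x \<in> carr E \<Longrightarrow> \<exists>y\<in>carr E. ad E x y = zer E"
  by (rule ad_inv0[rule_format])

lemma C0_pair: assumes a: "a \<in> C0s C D U F1" and b: "b \<in> C0s C D U F2"
  and M: "D \<in> Mcls C" "F1 \<in> Mcls C" "F2 \<in> Mcls C"
  shows "(\<lambda>x. pairing C (a x) (b x)) \<in> C0s C D U (prd C F1 F2)"
proof -
  have U: "openin (tp D) U" "U \<subseteq> carr D" using C0_props(1)[OF a M(1,2)] C0_sub[OF a M(1,2)] by auto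
  have d: "(\<lambda>x. pairing C x x) \<in> C0s C D U (prd C D D)"
    using C0_restr[OF II3[OF M(1)] M(1) prd_in[OF M(1) M(1)] U] .
  have "(\<lambda>x. (\<lambda>p. pairing C (a (pfst C p)) (b (psnd C p))) (pairing C x x)) \<in> C0s C D U (prd C F1 F2)"
    by (rule C0_comp[OF d II2[OF M(1) M(1) M(2) M(3) a b]]) (auto simp: M prd_in)
  then show ?thesis using C0_ext M prd_in by simp
qed

lemma C0_addf: assumes a: "a \<in> C0s C D U E" and b: "b \<in> C0s C D U E"
  and M: "D \<in> Mcls C" "E \<in> Mcls C"
  shows "(\<lambda>x. ad E (a x) (b x)) \<in> C0s C D U E"
proof -
  have "(\<lambda>x. (\<lambda>p. ad E (pfst C p) (psnd C p)) (pairing C (a x) (b x))) \<in> C0s C D U E"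
    by (rule C0_comp[OF C0_pair[OF a b M(1) M(2) M(2)] II5[OF M(2), THEN conjunct1]])
       (auto simp: M prd_in carr_prd intro: C0_in[OF a M] C0_in[OF b M])
  then show ?thesis by simp
qed

lemma C0_smf: assumes a: "a \<in> C0s C D U (Kobj C)" and b: "b \<in> C0s C D U E"
  and M: "D \<in> Mcls C" "E \<in> Mcls C"
  shows "(\<lambda>x. sm E (kv C (a x)) (b x)) \<in> C0s C D U E"
proof -
  have "(\<lambda>x. (\<lambda>p. sm E (kv C (pfst C p)) (psnd C p)) (pairing C (a x) (b x))) \<in> C0s C D U E"
    by (rule C0_comp[OF C0_pair[OF a b M(1) K_in M(2)] II5[OF M(2), THEN conjunct2]])
       (auto simp: M prd_in carr_prd K_in intro: C0_in[OF a M(1) K_in] C0_in[OF b M])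
  then show ?thesis by simp
qed

lemma C0_negf: assumes b: "b \<in> C0s C D U E" and M: "D \<in> Mcls C" "E \<in> Mcls C"
  shows "(\<lambda>x. sm E (-1) (b x)) \<in> C0s C D U E"
proof -
  have z: "zer E \<in> carr E" using tmod[OF M(2)] unfolding is_tmodule_def by (elim conjE)
  have "(\<lambda>x. (\<lambda>y. ad E (sm E (-1) y) (zer E)) (b x)) \<in> C0s C D U E"
    by (rule C0_comp[OF b I2[OF M(2) z]]) (auto simp: M intro: C0_in[OF b M])
  moreover have "\<And>x. x \<in> U \<Longrightarrow> sm E (-1) (b x) = ad E (sm E (-1) (b x)) (zer E)"
    using C0_in[OF b M] ad_zer[OF M(2)] sm_in[OF M(2)] by simp
  ultimately show ?thesis using C0_ext M by simp
qed

lemma C0_invf: assumes a: "a \<in> C0s C D U (Kobj C)" and M: "D \<in> Mcls C"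
  and nz: "a ` U \<subseteq> emb C ` (- {0})"
  shows "(\<lambda>x. emb C (inverse (kv C (a x)))) \<in> C0s C D U (Kobj C)"
  by (rule C0_comp[OF a I4(2) nz M K_in K_in])


lemma sm_zero: assumes M: "E \<in> Mcls C" and v: "v \<in> carr E" shows "sm E 0 v = zer E"
proof -
  define a where "a = sm E 0 v"
  have a: "a \<in> carr E" using sm_in[OF M v] a_def by simp
  have aa: "ad E a a = a" using sm_add[OF M v, of 0 0] a_def by simp
  obtain b where b: "b \<in> carr E" "ad E a b = zer E" using ad_inv[OF M a] by blast
  have "zer E = ad E (ad E a a) b" using aa b by simp
  also have "\<dots> = ad E a (ad E a b)" using ad_assoc[OF M a a b(1)] .
  also have "\<dots> = a" using b ad_zer[OF M a] by simp
  finally show ?thesis using a_def by simp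
qed

lemma msub_self: assumes M: "E \<in> Mcls C" and a: "a \<in> carr E" shows "msub E a a = zer E"
proof -
  have "msub E a a = ad E (sm E 1 a) (sm E (-1) a)" unfolding msub_def using sm_one[OF M a] by simp
  also have "\<dots> = sm E (1 + -1) a" by (rule sm_add[OF M a, symmetric])
  also have "\<dots> = zer E" using sm_zero[OF M a] by simp
  finally show ?thesis .
qed

lemma msub_in: "E \<in> Mcls C \<Longrightarrow> x \<in> carr E \<Longrightarrow> y \<in> carr E \<Longrightarrow> msub E x y \<in> carr E"
  unfolding msub_def by (simp add: ad_in sm_in)

lemma sm_cancel: "E \<in> Mcls C \<Longrightarrow> x \<in> carr E \<Longrightarrow> t \<noteq> 0 \<Longrightarrow> sm E (inverse t) (sm E t x) = x"
  by (simp add: sm_sm sm_one)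
lemma sm_cancel2: "E \<in> Mcls C \<Longrightarrow> x \<in> carr E \<Longrightarrow> t \<noteq> 0 \<Longrightarrow> sm E t (sm E (inverse t) x) = x"
  by (simp add: sm_sm sm_one)


lemma main:
  assumes ME: "E \<in> Mcls C" and MF: "F \<in> Mcls C"
    and Uo: "openin (tp E) U"
    and f: "f \<in> C0s C E U F"
    and PU: "P \<subseteq> U1 C E U"
    and Po: "openin (subtopology (tp (EEK C E)) (U1 C E U)) P"
    and P0: "{pairing C x (pairing C v (emb C 0)) | x v. x \<in> U \<and> v \<in> carr E} \<subseteq> P"
    and g: "g \<in> C0s C (EEK C E) P F"
    and gq: "\<forall>x v t. pairing C x (pairing C v (emb C t)) \<in> P \<longrightarrow> t \<noteq> 0 \<longrightarrow>
           g (pairing C x (pairing C v (emb C t)))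
             = sm F (inverse t) (msub F (f (ad E x (sm E t v))) (f x))"
  shows "C1 C E U F f \<and> (\<forall>h. diffquot_map C E U F f h \<longrightarrow> (\<forall>p\<in>P. h p = g p))"
proof -
  let ?K = "Kobj C" and ?EK = "prd C E (Kobj C)" and ?EEK = "EEK C E"
  have MK: "?K \<in> Mcls C" by (rule K_in)
  have MEK: "?EK \<in> Mcls C" by (simp add: prd_in ME MK)
  have MEEK: "?EEK \<in> Mcls C" unfolding EEK_def by (simp add: prd_in ME MEK)
  have UE: "U \<subseteq> carr E" using openin_subset[OF Uo] top_carr[OF ME] by simp
  have cEK: "carr ?EK = {pairing C v (emb C t) | v t. v \<in> carr E}"
    using carr_prd[OF ME MK] carr_K by auto
  have cEEK: "carr ?EEK = {pairing C x (pairing C v (emb C t)) | x v t. x \<in> carr E \<and> v \<in> carr E}"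
    unfolding EEK_def using carr_prd[OF ME MEK] cEK by auto
  have pX: "pfst C \<in> C0s C ?EEK (carr ?EEK) E" unfolding EEK_def using II1[OF ME MEK] by blast
  have ps: "psnd C \<in> C0s C ?EEK (carr ?EEK) ?EK" unfolding EEK_def using II1[OF ME MEK] by blast
  have pV: "(\<lambda>p. pfst C (psnd C p)) \<in> C0s C ?EEK (carr ?EEK) E"
    by (rule C0_comp[OF ps II1[OF ME MK, THEN conjunct1]]) (auto simp: cEEK cEK MEEK MEK ME)
  have pT: "(\<lambda>p. psnd C (psnd C p)) \<in> C0s C ?EEK (carr ?EEK) ?K"
    by (rule C0_comp[OF ps II1[OF ME MK, THEN conjunct2, THEN conjunct1]]) (auto simp: cEEK cEK MEEK MEK MK)
  define Y where "Y = (\<lambda>p. ad E (pfst C p) (sm E (kv C (psnd C (psnd C p))) (pfst C (psnd C p))))"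
  have Y: "Y \<in> C0s C ?EEK (carr ?EEK) E"
    unfolding Y_def by (rule C0_addf[OF pX C0_smf[OF pT pV MEEK ME] MEEK ME])
  have U1eq: "U1 C E U = {p \<in> {p \<in> carr ?EEK. pfst C p \<in> U}. Y p \<in> U}"
    unfolding U1_def Y_def cEEK using UE by auto
  have U1o: "openin (tp ?EEK) (U1 C E U)"
  proof -
    have o1: "openin (tp ?EEK) {p \<in> carr ?EEK. pfst C p \<in> U}" by (rule C0_preim[OF pX MEEK ME Uo])
    have "openin (tp ?EEK) {p \<in> {p \<in> carr ?EEK. pfst C p \<in> U}. Y p \<in> U}"
      by (rule C0_preim[OF C0_restr[OF Y MEEK ME o1] MEEK ME Uo]) auto
    then show ?thesis using U1eq by simp
  qed
  have U1sub: "U1 C E U \<subseteq> carr ?EEK" using U1eq by auto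
  have Pop: "openin (tp ?EEK) P" by (rule openin_trans_full[OF Po U1o])
  define W where "W = {p \<in> U1 C E U. psnd C (psnd C p) \<in> emb C ` (- {0})}"
  have Wo: "openin (tp ?EEK) W" unfolding W_def
    by (rule C0_preim[OF C0_restr[OF pT MEEK MK U1o U1sub] MEEK MK I4(1)])
  have WU1: "W \<subseteq> U1 C E U" unfolding W_def by auto
  have Wsub: "W \<subseteq> carr ?EEK" using WU1 U1sub by auto
  have pXW: "pfst C ` W \<subseteq> U" and YW: "Y ` W \<subseteq> U" using WU1 U1eq by auto
  have fX: "(\<lambda>p. f (pfst C p)) \<in> C0s C ?EEK W F"
    by (rule C0_comp[OF C0_restr[OF pX MEEK ME Wo Wsub] f pXW MEEK ME MF])
  have fY: "(\<lambda>p. f (Y p)) \<in> C0s C ?EEK W F"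
    by (rule C0_comp[OF C0_restr[OF Y MEEK ME Wo Wsub] f YW MEEK ME MF])
  have iT: "(\<lambda>p. emb C (inverse (kv C (psnd C (psnd C p))))) \<in> C0s C ?EEK W ?K"
    by (rule C0_invf[OF C0_restr[OF pT MEEK MK Wo Wsub] MEEK]) (auto simp: W_def)
  define D where "D = (\<lambda>p. sm F (inverse (kv C (psnd C (psnd C p)))) (msub F (f (Y p)) (f (pfst C p))))"
  have D: "D \<in> C0s C ?EEK W F"
  proof -
    have "(\<lambda>p. sm F (kv C (emb C (inverse (kv C (psnd C (psnd C p))))))
        (ad F (f (Y p)) (sm F (-1) (f (pfst C p))))) \<in> C0s C ?EEK W F"
      by (rule C0_smf[OF iT C0_addf[OF fY C0_negf[OF fX MEEK MF] MEEK MF] MEEK MF])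
    then show ?thesis unfolding D_def msub_def by simp
  qed
  define h where "h = (\<lambda>p. if p \<in> P then g p else D p)"
  have Dq: "D (pairing C x (pairing C v (emb C t))) = sm F (inverse t) (msub F (f (ad E x (sm E t v))) (f x))"
    for x v t unfolding D_def Y_def by simp
  have hP: "h \<in> C0s C ?EEK P F" by (rule C0_ext[OF g MEEK MF]) (simp add: h_def)
  have hW: "h \<in> C0s C ?EEK W F"
  proof (rule C0_ext[OF D MEEK MF])
    fix p assume p: "p \<in> W"
    from p have pU: "p \<in> U1 C E U" and pT: "psnd C (psnd C p) \<in> emb C ` (- {0})"
      unfolding W_def by auto
    from pU obtain x v t where pe: "p = pairing C x (pairing C v (emb C t))"
      unfolding U1_def by auto
    from pT have t: "t \<noteq> 0" unfolding pe by simp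
    show "h p = D p"
    proof (cases "p \<in> P")
      case True
      then show ?thesis using gq t unfolding h_def pe Dq by simp
    qed (simp add: h_def)
  qed
  have cover: "\<Union>{P, W} = U1 C E U"
  proof
    show "\<Union>{P, W} \<subseteq> U1 C E U" using PU WU1 by auto
    show "U1 C E U \<subseteq> \<Union>{P, W}"
    proof
      fix p assume p: "p \<in> U1 C E U"
      then obtain x v t where pe: "p = pairing C x (pairing C v (emb C t))" and x: "x \<in> U"
        and v: "v \<in> carr E" unfolding U1_def by auto
      show "p \<in> \<Union>{P, W}"
      proof (cases "t = 0")
        case True
        then have "p \<in> P" using P0 pe x v by blast
        then show ?thesis by simp
      next
        case False
        then have "p \<in> W" using p pe unfolding W_def by auto
        then show ?thesis by simp
      qed
    qed
  qed
  have hC0: "h \<in> C0s C ?EEK (U1 C E U) F"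
    by (rule C0_glue[OF MEEK MF U1o _ cover]) (use Pop Wo hP hW in auto)
  have hq: "msub F (f (ad E x (sm E t v))) (f x) = sm F t (h (pairing C x (pairing C v (emb C t))))"
    if x: "x \<in> U" and v: "v \<in> carr E" and xt: "ad E x (sm E t v) \<in> U" for x v t
  proof -
    let ?p = "pairing C x (pairing C v (emb C t))"
    have pU1: "?p \<in> U1 C E U" unfolding U1_def using x v xt by blast
    have hin: "h ?p \<in> carr F" by (rule C0_in[OF hC0 MEEK MF pU1])
    have fx: "f x \<in> carr F" by (rule C0_in[OF f ME MF x])
    have fxt: "f (ad E x (sm E t v)) \<in> carr F" by (rule C0_in[OF f ME MF xt])
    show ?thesis
    proof (cases "t = 0")
      case True
      have "ad E x (sm E t v) = x" using True sm_zero[OF ME v] ad_zer[OF ME] x UE by auto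
      then show ?thesis using True msub_self[OF MF fx] sm_zero[OF MF hin] by simp
    next
      case False
      have "h ?p = sm F (inverse t) (msub F (f (ad E x (sm E t v))) (f x))"
        using gq False unfolding h_def Dq by simp
      then show ?thesis using sm_cancel2[OF MF msub_in[OF MF fxt fx] False] by simp
    qed
  qed
  have dq: "diffquot_map C E U F f h" unfolding diffquot_map_def using hC0 hq by blast
  have uniq: "h' p = g p" if dh: "diffquot_map C E U F f h'" and p: "p \<in> P" for h' p
  proof -
    have h'C0: "h' \<in> C0s C ?EEK (U1 C E U) F" and h'q: "\<And>x v t. x \<in> U \<Longrightarrow> v \<in> carr E \<Longrightarrow>
        ad E x (sm E t v) \<in> U \<Longrightarrow>
        msub F (f (ad E x (sm E t v))) (f x) = sm F t (h' (pairing C x (pairing C v (emb C t))))"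
      using dh unfolding diffquot_map_def by auto
    obtain x v t where pe: "p = pairing C x (pairing C v (emb C t))" and x: "x \<in> U"
        and v: "v \<in> carr E" using p PU unfolding U1_def by auto
    define l where "l = (\<lambda>s. pairing C x (pairing C v s))"
    have l: "l \<in> C0s C ?K (carr ?K) ?EEK"
    proof -
      have a: "(\<lambda>s. pairing C v s) \<in> C0s C ?K (carr ?K) ?EK" using II1[OF ME MK] v by blast
      have b: "(\<lambda>w. pairing C x w) \<in> C0s C ?EK (carr ?EK) ?EEK"
        unfolding EEK_def using II1[OF ME MEK] x UE by blast
      show ?thesis unfolding l_def
        by (rule C0_comp[OF a b]) (auto simp: carr_prd ME MK MEK MEEK v)
    qed
    define V where "V = {s \<in> carr ?K. l s \<in> P}"
    have Vo: "openin (tp ?K) V" unfolding V_def by (rule C0_preim[OF l MK MEEK Pop])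
    have lV: "l \<in> C0s C ?K V ?EEK" by (rule C0_restr[OF l MK MEEK Vo]) (auto simp: V_def)
    have A: "(\<lambda>s. h' (l s)) \<in> C0s C ?K V F"
      by (rule C0_comp[OF lV h'C0 _ MK MEEK MF]) (use PU in \<open>auto simp: V_def\<close>)
    have B: "(\<lambda>s. g (l s)) \<in> C0s C ?K V F"
      by (rule C0_comp[OF lV g _ MK MEEK MF]) (auto simp: V_def)
    have eq: "\<forall>s\<in>V. kv C s \<noteq> 0 \<longrightarrow> h' (l s) = g (l s)"
    proof (intro ballI impI)
      fix s assume s: "s \<in> V" and nz: "kv C s \<noteq> 0"
      obtain t' where st: "s = emb C t'" using s unfolding V_def carr_K by auto
      have t': "t' \<noteq> 0" using nz st by simp
      have lP: "l s \<in> P" using s V_def by simp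
      then have "l s \<in> U1 C E U" using PU by auto
      then have xt: "ad E x (sm E t' v) \<in> U" unfolding U1_def l_def st by auto
      have hin: "h' (l s) \<in> carr F" by (rule C0_in[OF h'C0 MEEK MF]) (use lP PU in auto)
      have "g (l s) = sm F (inverse t') (msub F (f (ad E x (sm E t' v))) (f x))"
        using gq lP t' unfolding l_def st by simp
      also have "\<dots> = h' (l s)" using h'q[OF x v xt] sm_cancel[OF MF hin t'] unfolding l_def st by simp
      finally show "h' (l s) = g (l s)" by simp
    qed
    have tV: "emb C t \<in> V" unfolding V_def l_def using p pe carr_K by auto
    have "h' (l (emb C t)) = g (l (emb C t))" by (rule III[OF MF Vo A B eq tV])
    then show ?thesis using pe l_def by simp
  qed
  show ?thesis unfolding C1_def using f dq uniq by blast
qed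

end

theorem lemma2p6:
  fixes C :: "('k::field, 'u) concept"
  assumes "C0_concept C"
    and "E \<in> Mcls C" and "F \<in> Mcls C"
    and "openin (tp E) U"
    and "f \<in> C0s C E U F"
    and "P \<subseteq> U1 C E U"
    and "openin (subtopology (tp (EEK C E)) (U1 C E U)) P"
    and "{pairing C x (pairing C v (emb C 0)) | x v. x \<in> U \<and> v \<in> carr E} \<subseteq> P"
    and "g \<in> C0s C (EEK C E) P F"
    and "\<forall>x v t. pairing C x (pairing C v (emb C t)) \<in> P \<longrightarrow> t \<noteq> 0 \<longrightarrow>
           g (pairing C x (pairing C v (emb C t)))
             = sm F (inverse t) (msub F (f (ad E x (sm E t v))) (f x))"
  shows "C1 C E U F f \<and> (\<forall>h. diffquot_map C E U F f h \<longrightarrow> (\<forall>p\<in>P. h p = g p))"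
  using main[OF assms] .

end
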